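(* Let $\mathcal{X},\mathcal{A}$ be finite sets, and consider a stationary MFG $(\mathcal{X},\mathcal{A},p,r,\gamma)$ with $\gamma\in[0,1)$. For $\mu\in\Delta_{\mathcal{X}}$ and $\pi\in\Pi$, let $$J_\gamma(\pi;\mu)=\mathbb{E}\Big[\sum_{n\ge 0}\gamma^n r(x_n,a_n,\mu)\Big],\quad x_0\sim\mu,\ a_n\sim\pi(\cdot\mid x_n),\ x_{n+1}\sim p(\cdot\mid x_n,a_n,\mu),$$ and $\mathbf{BR}(\mu)=\operatorname{argmax}_{\pi\in\Pi}J_\gamma(\pi;\mu)$. Assume that (1) for every $\mu\in\Delta_{\mathcal{X}}$, $\mathbf{BR}(\mu)$ consists of a single policy $\pi^*_\mu$, and (2) the map $\Delta_{\mathcal{X}}\to\Pi$, $\mu\mapsto\pi^*_\mu$, is continuous (with $\Pi$ carrying its topology as a subset of $\mathbb{R}^{\mathcal{X}\times\mathcal{A}}$). Then this map is constant: there exists a single deterministic policy $\pi$ such that $\mathbf{BR}(\mu)=\{\pi\}$ for all $\mu\in\Delta_{\mathcal{X}}$.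
   Context: $\Delta_{\mathcal{L}}$ denotes the set of probability distributions on a finite set $\mathcal{L}$. $\Pi=(\Delta_{\mathcal{A}})^{\mathcal{X}}$ is the set of stationary policies, a policy $\pi$ mapping each state $x$ to a distribution $\pi(\cdot\mid x)\in\Delta_{\mathcal{A}}$; a policy is deterministic if each $\pi(\cdot\mid x)$ is a Dirac mass. The transition kernel is $p:\mathcal{X}\times\mathcal{A}\times\Delta_{\mathcal{X}}\to\Delta_{\mathcal{X}}$ and the reward is $r:\mathcal{X}\times\mathcal{A}\times\Delta_{\mathcal{X}}\to\mathbb{R}$; in $J_\gamma(\pi;\mu)$ the population distribution $\mu$ is held fixed. *)

theory Defs
  imports "HOL-Analysis.Analysis"
begin

definition distrs :: "('s::finite \<Rightarrow> real) set" where
  "distrs = {d. (\<forall>s. 0 \<le> d s) \<and> (\<Sum>s\<in>UNIV. d s) = 1}"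

definition policies :: "('x::finite \<Rightarrow> 'a::finite \<Rightarrow> real) set" where
  "policies = {pol. \<forall>x. pol x \<in> distrs}"

definition deterministic :: "('x::finite \<Rightarrow> 'a::finite \<Rightarrow> real) \<Rightarrow> bool" where
  "deterministic pol \<longleftrightarrow> (\<forall>x. \<exists>a. pol x = (\<lambda>b. if b = a then 1 else 0))"

text \<open>Law of the state x_n: x_0 ~ mu, a_n ~ pol(.|x_n), x_{n+1} ~ p(.|x_n,a_n,mu),
  with the population distribution mu frozen in the kernel.\<close>
fun state_law ::
  "('x::finite \<Rightarrow> 'a::finite \<Rightarrow> ('x \<Rightarrow> real) \<Rightarrow> 'x \<Rightarrow> real) \<Rightarrow>
   ('x \<Rightarrow> 'a \<Rightarrow> real) \<Rightarrow> ('x \<Rightarrow> real) \<Rightarrow> nat \<Rightarrow> 'x \<Rightarrow> real" where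
  "state_law p pol mu 0 = mu"
| "state_law p pol mu (Suc n) =
     (\<lambda>y. \<Sum>x\<in>UNIV. \<Sum>a\<in>UNIV. state_law p pol mu n x * pol x a * p x a mu y)"

text \<open>J_gamma(pol; mu) = E[sum_n gamma^n r(x_n,a_n,mu)], written via the laws of (x_n,a_n).\<close>
definition J ::
  "('x::finite \<Rightarrow> 'a::finite \<Rightarrow> ('x \<Rightarrow> real) \<Rightarrow> 'x \<Rightarrow> real) \<Rightarrow>
   ('x \<Rightarrow> 'a \<Rightarrow> ('x \<Rightarrow> real) \<Rightarrow> real) \<Rightarrow> real \<Rightarrow>
   ('x \<Rightarrow> 'a \<Rightarrow> real) \<Rightarrow> ('x \<Rightarrow> real) \<Rightarrow> real" where
  "J p r \<gamma> pol mu = (\<Sum>n. \<gamma> ^ n *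
      (\<Sum>x\<in>UNIV. \<Sum>a\<in>UNIV. state_law p pol mu n x * pol x a * r x a mu))"

definition BR ::
  "('x::finite \<Rightarrow> 'a::finite \<Rightarrow> ('x \<Rightarrow> real) \<Rightarrow> 'x \<Rightarrow> real) \<Rightarrow>
   ('x \<Rightarrow> 'a \<Rightarrow> ('x \<Rightarrow> real) \<Rightarrow> real) \<Rightarrow> real \<Rightarrow>
   ('x \<Rightarrow> real) \<Rightarrow> ('x \<Rightarrow> 'a \<Rightarrow> real) set" where
  "BR p r \<gamma> mu = {pol \<in> policies. \<forall>pol' \<in> policies. J p r \<gamma> pol' mu \<le> J p r \<gamma> pol mu}"

end

theory Submission
  imports Defs
begin

fun law :: "('x::finite \<Rightarrow> 'a::finite \<Rightarrow> 'x \<Rightarrow> real) \<Rightarrow> ('x \<Rightarrow> 'a \<Rightarrow> real) \<Rightarrow> ('x \<Rightarrow> real) \<Rightarrow> nat \<Rightarrow> 'x \<Rightarrow> real" where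
  "law P pol m 0 = m"
| "law P pol m (Suc n) = (\<lambda>y. \<Sum>x\<in>UNIV. \<Sum>a\<in>UNIV. law P pol m n x * pol x a * P x a y)"

definition rho :: "('x::finite \<Rightarrow> 'a::finite \<Rightarrow> real) \<Rightarrow> ('x \<Rightarrow> 'a \<Rightarrow> real) \<Rightarrow> ('x \<Rightarrow> real) \<Rightarrow> real" where
  "rho R pol m = (\<Sum>x\<in>UNIV. \<Sum>a\<in>UNIV. m x * pol x a * R x a)"

definition JJ :: "('x::finite \<Rightarrow> 'a::finite \<Rightarrow> 'x \<Rightarrow> real) \<Rightarrow> ('x \<Rightarrow> 'a \<Rightarrow> real) \<Rightarrow> real \<Rightarrow> ('x \<Rightarrow> 'a \<Rightarrow> real) \<Rightarrow> ('x \<Rightarrow> real) \<Rightarrow> real" where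
  "JJ P R g pol m = (\<Sum>n. g ^ n * rho R pol (law P pol m n))"

lemma state_law_eq: "state_law p pol mu n = law (\<lambda>x a. p x a mu) pol mu n"
  by (induction n) auto

lemma J_eq: "J p r g pol mu = JJ (\<lambda>x a. p x a mu) (\<lambda>x a. r x a mu) g pol mu"
  by (simp add: J_def JJ_def rho_def state_law_eq)

definition delta :: "'x \<Rightarrow> 'x \<Rightarrow> real" where "delta z = (\<lambda>w. if w = z then 1 else 0)"

lemma delta_distr: "(delta z :: 'x::finite \<Rightarrow> real) \<in> distrs"
  by (simp add: distrs_def delta_def)

lemma distr_le1: "m \<in> distrs \<Longrightarrow> m x \<le> 1"
  unfolding distrs_def using member_le_sum[of x UNIV m] by auto

lemma distr_nn: "m \<in> distrs \<Longrightarrow> 0 \<le> m x"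
  unfolding distrs_def by auto

lemma law_distr:
  assumes pol: "pol \<in> policies" and P: "\<And>x a. P x a \<in> distrs" and m: "m \<in> distrs"
  shows "law P pol m n \<in> distrs"
proof (induction n)
  case 0 thus ?case using m by simp
next
  case (Suc n)
  let ?l = "law P pol m n"
  have nn: "\<forall>y. 0 \<le> law P pol m (Suc n) y"
    using Suc pol P by (auto simp: policies_def distrs_def intro!: sum_nonneg mult_nonneg_nonneg)
  have "(\<Sum>y\<in>UNIV. law P pol m (Suc n) y) = (\<Sum>x\<in>UNIV. \<Sum>y\<in>UNIV. \<Sum>a\<in>UNIV. ?l x * pol x a * P x a y)"
    by (simp only: law.simps) (rule sum.swap)
  also have "\<dots> = (\<Sum>x\<in>UNIV. \<Sum>a\<in>UNIV. \<Sum>y\<in>UNIV. ?l x * pol x a * P x a y)"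
    by (rule sum.cong[OF refl], rule sum.swap)
  also have "\<dots> = (\<Sum>x\<in>UNIV. \<Sum>a\<in>UNIV. ?l x * pol x a)"
    using P by (simp add: sum_distrib_left[symmetric] distrs_def)
  also have "\<dots> = (\<Sum>x\<in>UNIV. ?l x)"
    using pol by (simp add: sum_distrib_left[symmetric] distrs_def policies_def)
  also have "\<dots> = 1" using Suc by (simp add: distrs_def)
  finally show ?case using nn by (simp add: distrs_def)
qed

definition Rm :: "('x::finite \<Rightarrow> 'a::finite \<Rightarrow> real) \<Rightarrow> real" where
  "Rm R = (\<Sum>x\<in>UNIV. \<Sum>a\<in>UNIV. \<bar>R x a\<bar>)"

lemma rho_bound:
  assumes pol: "pol \<in> policies" and m: "m \<in> distrs"
  shows "\<bar>rho R pol m\<bar> \<le> Rm R"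
proof -
  have "\<bar>rho R pol m\<bar> \<le> (\<Sum>x\<in>UNIV. \<bar>\<Sum>a\<in>UNIV. m x * pol x a * R x a\<bar>)"
    unfolding rho_def by (rule sum_abs)
  also have "\<dots> \<le> (\<Sum>x\<in>UNIV. \<Sum>a\<in>UNIV. \<bar>m x * pol x a * R x a\<bar>)"
    by (intro sum_mono sum_abs)
  also have "\<dots> \<le> Rm R" unfolding Rm_def
  proof (intro sum_mono)
    fix x a
    have pd: "pol x \<in> distrs" using pol by (simp add: policies_def)
    have "m x * pol x a \<le> 1"
      by (rule mult_le_one[OF distr_le1[OF m] distr_nn[OF pd] distr_le1[OF pd]])
    moreover have "0 \<le> m x * pol x a"
      using distr_nn[OF m] distr_nn[OF pd] by simp
    ultimately have "(m x * pol x a) * \<bar>R x a\<bar> \<le> \<bar>R x a\<bar>"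
      by (intro mult_left_le_one_le) auto
    moreover have "\<bar>m x * pol x a * R x a\<bar> = (m x * pol x a) * \<bar>R x a\<bar>"
      using \<open>0 \<le> m x * pol x a\<close> by (metis abs_mult abs_of_nonneg)
    ultimately show "\<bar>m x * pol x a * R x a\<bar> \<le> \<bar>R x a\<bar>" by simp
  qed
  finally show ?thesis .
qed

lemma JJ_summable:
  assumes g: "0 \<le> g" "g < 1" and pol: "pol \<in> policies" and P: "\<And>x a. P x a \<in> distrs" and m: "m \<in> distrs"
  shows "summable (\<lambda>n. g ^ n * rho R pol (law P pol m n))"
proof (rule summable_comparison_test')
  show "summable (\<lambda>n. Rm R * g ^ n)" using g by (intro summable_mult summable_geometric) simp
  fix n :: nat
  have "\<bar>rho R pol (law P pol m n)\<bar> \<le> Rm R" by (rule rho_bound[OF pol law_distr[OF pol P m]])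
  then show "norm (g ^ n * rho R pol (law P pol m n)) \<le> Rm R * g ^ n"
  proof -
    have "\<bar>rho R pol (law P pol m n)\<bar> * g ^ n \<le> Rm R * g ^ n"
      using g \<open>\<bar>rho R pol (law P pol m n)\<bar> \<le> Rm R\<close> by (intro mult_right_mono) auto
    then show ?thesis using g by (simp add: abs_mult mult.commute)
  qed
qed

lemma JJ_bound:
  assumes g: "0 \<le> g" "g < 1" and pol: "pol \<in> policies" and P: "\<And>x a. P x a \<in> distrs" and m: "m \<in> distrs"
  shows "\<bar>JJ P R g pol m\<bar> \<le> Rm R / (1 - g)"
proof -
  have s1: "summable (\<lambda>n. Rm R * g ^ n)" using g by (intro summable_mult summable_geometric) simp
  have sm: "(\<lambda>n. Rm R * g ^ n) sums (Rm R / (1 - g))"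
    using g sums_mult[OF geometric_sums[of g], of "Rm R"] by simp
  have "norm (JJ P R g pol m) \<le> Rm R / (1 - g)"
    unfolding JJ_def
  proof (rule norm_sums_le[OF summable_sums[OF JJ_summable[OF g pol P m]] sm])
    fix n :: nat
    have "\<bar>rho R pol (law P pol m n)\<bar> \<le> Rm R" by (rule rho_bound[OF pol law_distr[OF pol P m]])
    then show "norm (g ^ n * rho R pol (law P pol m n)) \<le> Rm R * g ^ n"
    proof -
    have "\<bar>rho R pol (law P pol m n)\<bar> * g ^ n \<le> Rm R * g ^ n"
      using g \<open>\<bar>rho R pol (law P pol m n)\<bar> \<le> Rm R\<close> by (intro mult_right_mono) auto
    then show ?thesis using g by (simp add: abs_mult mult.commute)
  qed
  qed
  then show ?thesis by simp
qed

lemma sumA: "(\<Sum>x\<in>(UNIV::'x::finite set). \<Sum>a\<in>(UNIV::'a::finite set). (\<Sum>z\<in>(UNIV::'z::finite set). m z * F z x) * G x a)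
   = (\<Sum>z\<in>UNIV. m z * (\<Sum>x\<in>UNIV. \<Sum>a\<in>UNIV. F z x * G x a :: real))"
proof -
  have "(\<Sum>x\<in>(UNIV::'x set). \<Sum>a\<in>(UNIV::'a set). (\<Sum>z\<in>(UNIV::'z set). m z * F z x) * G x a)
     = (\<Sum>x\<in>UNIV. \<Sum>a\<in>UNIV. \<Sum>z\<in>UNIV. m z * (F z x * G x a))"
    by (simp add: sum_distrib_right mult.assoc)
  also have "\<dots> = (\<Sum>x\<in>UNIV. \<Sum>z\<in>UNIV. \<Sum>a\<in>UNIV. m z * (F z x * G x a))"
    by (rule sum.cong[OF refl], rule sum.swap)
  also have "\<dots> = (\<Sum>z\<in>UNIV. \<Sum>x\<in>UNIV. \<Sum>a\<in>UNIV. m z * (F z x * G x a))"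
    by (rule sum.swap)
  also have "\<dots> = (\<Sum>z\<in>UNIV. m z * (\<Sum>x\<in>UNIV. \<Sum>a\<in>UNIV. F z x * G x a))"
    by (simp add: sum_distrib_left)
  finally show ?thesis .
qed

lemma sumB: "(\<Sum>z\<in>(UNIV::'z::finite set). (\<Sum>a\<in>(UNIV::'a::finite set). f a z) * V z)
   = (\<Sum>a\<in>UNIV. \<Sum>z\<in>UNIV. f a z * V z :: real)"
proof -
  have "(\<Sum>z\<in>(UNIV::'z set). (\<Sum>a\<in>(UNIV::'a set). f a z) * V z) = (\<Sum>z\<in>UNIV. \<Sum>a\<in>UNIV. f a z * V z)"
    by (simp add: sum_distrib_right)
  also have "\<dots> = (\<Sum>a\<in>UNIV. \<Sum>z\<in>UNIV. f a z * V z)" by (rule sum.swap)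
  finally show ?thesis .
qed

lemma sumC: "(\<Sum>z\<in>(UNIV::'z::finite set). (\<Sum>y\<in>(UNIV::'y::finite set). \<Sum>a\<in>(UNIV::'a::finite set). f y a z) * V z)
   = (\<Sum>y\<in>UNIV. \<Sum>a\<in>UNIV. \<Sum>z\<in>UNIV. f y a z * V z :: real)"
proof -
  have "(\<Sum>z\<in>(UNIV::'z set). (\<Sum>y\<in>(UNIV::'y set). \<Sum>a\<in>(UNIV::'a set). f y a z) * V z)
     = (\<Sum>y\<in>UNIV. \<Sum>z\<in>UNIV. (\<Sum>a\<in>UNIV. f y a z) * V z)"
    by (simp add: sum_distrib_right) (rule sum.swap)
  also have "\<dots> = (\<Sum>y\<in>UNIV. \<Sum>a\<in>UNIV. \<Sum>z\<in>UNIV. f y a z * V z)"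
    by (rule sum.cong[OF refl], rule sumB)
  finally show ?thesis .
qed

lemma sumD: "(\<Sum>x\<in>(UNIV::'x::finite set). \<Sum>a\<in>(UNIV::'a::finite set). (if x = y then 1 else 0) * (H x a :: real)) = (\<Sum>a\<in>UNIV. H y a)"
proof -
  have "(\<Sum>x\<in>(UNIV::'x set). \<Sum>a\<in>(UNIV::'a set). (if x = y then 1 else 0) * (H x a :: real))
     = (\<Sum>x\<in>(UNIV::'x set). (if x = y then 1 else 0) * (\<Sum>a\<in>UNIV. H x a))"
    by (simp only: sum_distrib_left)
  also have "\<dots> = (\<Sum>a\<in>UNIV. H y a)" by (simp add: if_distrib[of "\<lambda>t. t * _"] sum.delta cong: if_cong)
  finally show ?thesis .
qed

lemma sumE: "(\<Sum>a\<in>(UNIV::'a::finite set). p a * (R a + g * (\<Sum>z\<in>(UNIV::'z::finite set). P a z * V z)))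
  = (\<Sum>a\<in>UNIV. p a * R a) + g * (\<Sum>a\<in>UNIV. \<Sum>z\<in>UNIV. p a * P a z * (V z::real))"
proof -
  have "(\<Sum>a\<in>(UNIV::'a set). p a * (R a + g * (\<Sum>z\<in>(UNIV::'z set). P a z * V z)))
     = (\<Sum>a\<in>UNIV. p a * R a + g * (\<Sum>z\<in>UNIV. p a * P a z * V z))"
  proof (rule sum.cong[OF refl])
    fix a
    have "p a * (\<Sum>z\<in>UNIV. P a z * V z) = (\<Sum>z\<in>UNIV. p a * P a z * V z)"
      by (simp add: sum_distrib_left mult.assoc)
    then show "p a * (R a + g * (\<Sum>z\<in>UNIV. P a z * V z)) = p a * R a + g * (\<Sum>z\<in>UNIV. p a * P a z * V z)"
      by (metis distrib_left mult.left_commute)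
  qed
  also have "\<dots> = (\<Sum>a\<in>UNIV. p a * R a) + g * (\<Sum>a\<in>UNIV. \<Sum>z\<in>UNIV. p a * P a z * V z)"
    by (simp only: sum.distrib sum_distrib_left)
  finally show ?thesis .
qed

lemma sumF: "(\<Sum>y\<in>(UNIV::'y::finite set). L y * (A y + g * B y)) = (\<Sum>y\<in>UNIV. L y * A y) + g * (\<Sum>y\<in>UNIV. L y * (B y::real))"
proof -
  have "(\<Sum>y\<in>(UNIV::'y set). L y * (A y + g * B y)) = (\<Sum>y\<in>UNIV. L y * A y + g * (L y * B y))"
    by (rule sum.cong[OF refl]) (simp add: algebra_simps)
  also have "\<dots> = (\<Sum>y\<in>UNIV. L y * A y) + g * (\<Sum>y\<in>UNIV. L y * (B y::real))"
    by (simp only: sum.distrib sum_distrib_left)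
  finally show ?thesis .
qed


lemma law_lin: "law P pol m n y = (\<Sum>z\<in>UNIV. m z * law P pol (delta z) n y)"
proof (induction n arbitrary: y)
  case 0 show ?case by (simp add: delta_def if_distrib[of "(*) _"] sum.delta cong: if_cong)
next
  case (Suc n)
  have "law P pol m (Suc n) y = (\<Sum>x\<in>UNIV. \<Sum>a\<in>UNIV. (\<Sum>z\<in>UNIV. m z * law P pol (delta z) n x) * pol x a * P x a y)"
    using Suc by simp
  also have "\<dots> = (\<Sum>z\<in>UNIV. m z * (\<Sum>x\<in>UNIV. \<Sum>a\<in>UNIV. law P pol (delta z) n x * pol x a * P x a y))"
    by (simp only: mult.assoc sumA)
  finally show ?case by simp
qed

lemma rho_lin: "rho R pol (law P pol m n) = (\<Sum>z\<in>UNIV. m z * rho R pol (law P pol (delta z) n))"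
proof -
  have "rho R pol (law P pol m n) = (\<Sum>x\<in>UNIV. \<Sum>a\<in>UNIV. (\<Sum>z\<in>UNIV. m z * law P pol (delta z) n x) * pol x a * R x a)"
    unfolding rho_def by (subst law_lin) simp
  also have "\<dots> = (\<Sum>z\<in>UNIV. m z * rho R pol (law P pol (delta z) n))"
    unfolding rho_def by (simp only: mult.assoc sumA)
  finally show ?thesis .
qed

lemma JJ_lin:
  assumes g: "0 \<le> g" "g < 1" and pol: "pol \<in> policies" and P: "\<And>x a. P x a \<in> distrs"
  shows "JJ P R g pol m = (\<Sum>z\<in>UNIV. m z * JJ P R g pol (delta z))"
proof -
  have "JJ P R g pol m = (\<Sum>n. \<Sum>z\<in>UNIV. m z * (g ^ n * rho R pol (law P pol (delta z) n)))"
    unfolding JJ_def by (subst rho_lin) (simp add: sum_distrib_left mult_ac)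
  also have "\<dots> = (\<Sum>z\<in>UNIV. \<Sum>n. m z * (g ^ n * rho R pol (law P pol (delta z) n)))"
    by (intro suminf_sum summable_mult JJ_summable[OF g pol P delta_distr])
  also have "\<dots> = (\<Sum>z\<in>UNIV. m z * JJ P R g pol (delta z))"
    unfolding JJ_def by (intro sum.cong refl suminf_mult JJ_summable[OF g pol P delta_distr])
  finally show ?thesis .
qed

lemma law_shift: "law P pol m (Suc n) = law P pol (law P pol m (Suc 0)) n"
  by (induction n) auto

lemma JJ_step:
  assumes g: "0 \<le> g" "g < 1" and pol: "pol \<in> policies" and P: "\<And>x a. P x a \<in> distrs" and m: "m \<in> distrs"
  shows "JJ P R g pol m = rho R pol m + g * JJ P R g pol (law P pol m (Suc 0))"
proof -
  let ?f = "\<lambda>n. g ^ n * rho R pol (law P pol m n)"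
  have s: "summable ?f" by (rule JJ_summable[OF g pol P m])
  have m1: "law P pol m (Suc 0) \<in> distrs" by (rule law_distr[OF pol P m])
  have "(\<Sum>n. ?f (Suc n)) = (\<Sum>n. g * (g ^ n * rho R pol (law P pol (law P pol m (Suc 0)) n)))"
  proof (rule suminf_cong)
    fix n
    show "?f (Suc n) = g * (g ^ n * rho R pol (law P pol (law P pol m (Suc 0)) n))"
      by (subst law_shift) (simp only: power_Suc mult.assoc)
  qed
  also have "\<dots> = g * JJ P R g pol (law P pol m (Suc 0))"
    unfolding JJ_def by (intro suminf_mult JJ_summable[OF g pol P m1])
  finally have c: "(\<Sum>n. ?f (Suc n)) = g * JJ P R g pol (law P pol m (Suc 0))" .
  have "suminf ?f = ?f 0 + g * JJ P R g pol (law P pol m (Suc 0))"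
    using suminf_split_head[OF s] c by linarith
  moreover have "?f 0 = rho R pol m" by simp
  moreover have "JJ P R g pol m = suminf ?f" by (simp only: JJ_def)
  ultimately show ?thesis by simp
qed


definition VV where "VV P R g pol y = JJ P R g pol (delta y)"
definition QQ where "QQ P R g pol y a = R y a + g * (\<Sum>z\<in>UNIV. P y a z * VV P R g pol z)"

lemma VV_bellman:
  assumes g: "0 \<le> g" "g < 1" and pol: "pol \<in> policies" and P: "\<And>x a. P x a \<in> distrs"
  shows "VV P R g pol y = (\<Sum>a\<in>UNIV. pol y a * QQ P R g pol y a)"
proof -
  have r: "rho R pol (delta y) = (\<Sum>a\<in>UNIV. pol y a * R y a)"
    unfolding rho_def delta_def by (simp only: mult.assoc sumD)
  have l: "law P pol (delta y) (Suc 0) z = (\<Sum>a\<in>UNIV. pol y a * P y a z)" for z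
    unfolding delta_def law.simps by (simp only: mult.assoc sumD)
  have "VV P R g pol y = rho R pol (delta y) + g * JJ P R g pol (law P pol (delta y) (Suc 0))"
    unfolding VV_def by (rule JJ_step[OF g pol P delta_distr])
  also have "JJ P R g pol (law P pol (delta y) (Suc 0)) = (\<Sum>z\<in>UNIV. (\<Sum>a\<in>UNIV. pol y a * P y a z) * VV P R g pol z)"
    unfolding VV_def by (subst JJ_lin[OF g pol P]) (simp only: l)
  also have "(\<Sum>z\<in>UNIV. (\<Sum>a\<in>UNIV. pol y a * P y a z) * VV P R g pol z)
     = (\<Sum>a\<in>UNIV. \<Sum>z\<in>UNIV. pol y a * P y a z * VV P R g pol z)" by (rule sumB)
  finally show ?thesis unfolding QQ_def r sumE .
qed


lemma improve:
  assumes g: "0 \<le> g" "g < 1" and pol: "pol \<in> policies" and pol': "pol' \<in> policies"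
    and P: "\<And>x a. P x a \<in> distrs" and m: "m \<in> distrs"
    and imp: "\<And>y. VV P R g pol y \<le> (\<Sum>a\<in>UNIV. pol' y a * QQ P R g pol y a)"
  shows "JJ P R g pol m \<le> JJ P R g pol' m"
proof -
  define L where "L n = law P pol' m n" for n
  define V where "V y = VV P R g pol y" for y
  define h where "h n = (\<Sum>y\<in>UNIV. L n y * V y)" for n
  have Ld: "L n \<in> distrs" for n unfolding L_def by (rule law_distr[OF pol' P m])
  have key: "(\<Sum>y\<in>UNIV. L n y * (\<Sum>a\<in>UNIV. pol' y a * QQ P R g pol y a)) = rho R pol' (L n) + g * h (Suc n)" for n
  proof -
    have "(\<Sum>y\<in>UNIV. L n y * (\<Sum>a\<in>UNIV. pol' y a * QQ P R g pol y a))
      = (\<Sum>y\<in>UNIV. L n y * ((\<Sum>a\<in>UNIV. pol' y a * R y a) + g * (\<Sum>a\<in>UNIV. \<Sum>z\<in>UNIV. pol' y a * P y a z * V z)))"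
      unfolding QQ_def V_def sumE ..
    also have "\<dots> = rho R pol' (L n) + g * (\<Sum>y\<in>UNIV. \<Sum>a\<in>UNIV. \<Sum>z\<in>UNIV. L n y * pol' y a * P y a z * V z)"
      unfolding sumF rho_def by (simp only: sum_distrib_left mult.assoc)
    also have "(\<Sum>y\<in>UNIV. \<Sum>a\<in>UNIV. \<Sum>z\<in>UNIV. L n y * pol' y a * P y a z * V z) = h (Suc n)"
      unfolding h_def L_def law.simps by (rule sumC[symmetric])
    finally show ?thesis .
  qed
  have ineq: "h n \<le> rho R pol' (L n) + g * h (Suc n)" for n
  proof -
    have "h n \<le> (\<Sum>y\<in>UNIV. L n y * (\<Sum>a\<in>UNIV. pol' y a * QQ P R g pol y a))"
      unfolding h_def V_def by (intro sum_mono mult_left_mono imp distr_nn[OF Ld])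
    then show ?thesis using key by simp
  qed
  have tle: "g ^ n * h n - g ^ Suc n * h (Suc n) \<le> g ^ n * rho R pol' (L n)" for n
  proof -
    have "g ^ n * h n \<le> g ^ n * (rho R pol' (L n) + g * h (Suc n))"
      using g by (intro mult_left_mono ineq) auto
    then show ?thesis by (simp add: algebra_simps)
  qed
  define C where "C = (\<Sum>y\<in>UNIV. \<bar>V y\<bar>)"
  have hb: "\<bar>h n\<bar> \<le> C" for n
  proof -
    have "\<bar>h n\<bar> \<le> (\<Sum>y\<in>UNIV. \<bar>L n y * V y\<bar>)" unfolding h_def by (rule sum_abs)
    also have "\<dots> \<le> C" unfolding C_def
    proof (intro sum_mono)
      fix y
      have "\<bar>L n y * V y\<bar> = L n y * \<bar>V y\<bar>" using distr_nn[OF Ld] by (simp add: abs_mult)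
      also have "\<dots> \<le> \<bar>V y\<bar>" using distr_nn[OF Ld] distr_le1[OF Ld] by (intro mult_left_le_one_le) auto
      finally show "\<bar>L n y * V y\<bar> \<le> \<bar>V y\<bar>" .
    qed
    finally show ?thesis .
  qed
  have lim: "(\<lambda>n. g ^ n * h n) \<longlonglongrightarrow> 0"
  proof (rule Lim_null_comparison)
    show "\<forall>\<^sub>F n in sequentially. norm (g ^ n * h n) \<le> C * g ^ n"
    proof (intro always_eventually allI)
      fix n
      have "\<bar>h n\<bar> * g ^ n \<le> C * g ^ n" using hb g by (intro mult_right_mono) auto
      then show "norm (g ^ n * h n) \<le> C * g ^ n" using g by (simp add: abs_mult mult.commute)
    qed
    show "(\<lambda>n. C * g ^ n) \<longlonglongrightarrow> 0" using g by (intro tendsto_mult_right_zero LIMSEQ_power_zero) auto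
  qed
  have ts: "(\<lambda>n. g ^ n * h n - g ^ Suc n * h (Suc n)) sums (h 0)"
    using telescope_sums'[OF lim] by simp
  have h0: "h 0 = JJ P R g pol m"
    unfolding h_def L_def V_def VV_def law.simps(1) by (rule JJ_lin[OF g pol P, symmetric])
  have js: "(\<lambda>n. g ^ n * rho R pol' (L n)) sums (JJ P R g pol' m)"
    unfolding JJ_def L_def by (rule summable_sums[OF JJ_summable[OF g pol' P m]])
  show ?thesis using sums_le[OF tle ts js] h0 by simp
qed


lemma finite_det: "finite {pol::'x::finite \<Rightarrow> 'a::finite \<Rightarrow> real. deterministic pol}"
proof (rule finite_subset)
  show "{pol::'x \<Rightarrow> 'a \<Rightarrow> real. deterministic pol} \<subseteq> range (\<lambda>f::'x \<Rightarrow> 'a. \<lambda>x b. if b = f x then 1 else 0)"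
  proof
    fix pol :: "'x \<Rightarrow> 'a \<Rightarrow> real" assume "pol \<in> {pol. deterministic pol}"
    then have "\<forall>x. \<exists>a. pol x = (\<lambda>b. if b = a then 1 else 0)" by (simp add: deterministic_def)
    then obtain f where "\<forall>x. pol x = (\<lambda>b. if b = f x then 1 else 0)" by metis
    then have "pol = (\<lambda>x b. if b = f x then 1 else 0)" by auto
    then show "pol \<in> range (\<lambda>f::'x \<Rightarrow> 'a. \<lambda>x b. if b = f x then 1 else 0)" by blast
  qed
  show "finite (range (\<lambda>f::'x \<Rightarrow> 'a. \<lambda>x b. if b = f x then 1 else 0))" by simp
qed

theorem mainTheorem2:
  fixes p :: "'x::finite \<Rightarrow> 'a::finite \<Rightarrow> ('x \<Rightarrow> real) \<Rightarrow> 'x \<Rightarrow> real"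
    and r :: "'x \<Rightarrow> 'a \<Rightarrow> ('x \<Rightarrow> real) \<Rightarrow> real"
    and \<gamma> :: real
    and br :: "('x \<Rightarrow> real) \<Rightarrow> ('x \<Rightarrow> 'a \<Rightarrow> real)"
  assumes gamma: "0 \<le> \<gamma>" "\<gamma> < 1"
    and kernel: "\<And>x a mu. mu \<in> distrs \<Longrightarrow> p x a mu \<in> distrs"
    and unique: "\<And>mu. mu \<in> distrs \<Longrightarrow> BR p r \<gamma> mu = {br mu}"
    and cont: "continuous_on distrs br"
  shows "\<exists>pol. deterministic pol \<and> (\<forall>mu \<in> distrs. BR p r \<gamma> mu = {pol})"
proof -
  have det: "deterministic (br mu)" if mu: "mu \<in> distrs" for mu
  proof -
    define P where "P = (\<lambda>x a. p x a mu)"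
    define R where "R = (\<lambda>x a. r x a mu)"
    have Pd: "\<And>x a. P x a \<in> distrs" unfolding P_def using kernel mu by simp
    have brBR: "br mu \<in> BR p r \<gamma> mu" using unique mu by simp
    hence pol: "br mu \<in> policies" and opt: "\<forall>pol'\<in>policies. J p r \<gamma> pol' mu \<le> J p r \<gamma> (br mu) mu"
      by (auto simp: BR_def)
    show ?thesis unfolding deterministic_def
    proof
      fix x
      let ?Q = "QQ P R \<gamma> (br mu) x"
      have "Max (range ?Q) \<in> range ?Q" by (rule Max_in) auto
      then obtain a where aM: "?Q a = Max (range ?Q)" by (auto simp: image_iff)
      have amax: "?Q b \<le> ?Q a" for b unfolding aM by (rule Max_ge) auto
      define pol' where "pol' = (br mu)(x := delta a)"
      have pol': "pol' \<in> policies" using pol delta_distr by (auto simp: pol'_def policies_def)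
      have imp: "VV P R \<gamma> (br mu) y \<le> (\<Sum>b\<in>UNIV. pol' y b * QQ P R \<gamma> (br mu) y b)" for y
      proof (cases "y = x")
        case True
        have px: "br mu x \<in> distrs" using pol by (simp add: policies_def)
        have "VV P R \<gamma> (br mu) x = (\<Sum>b\<in>UNIV. br mu x b * ?Q b)"
          by (rule VV_bellman[OF gamma pol Pd])
        also have "\<dots> \<le> (\<Sum>b\<in>UNIV. br mu x b * ?Q a)"
          by (intro sum_mono mult_left_mono amax distr_nn[OF px])
        also have "\<dots> = ?Q a" using px by (simp add: sum_distrib_right[symmetric] distrs_def)
        also have "\<dots> = (\<Sum>b\<in>UNIV. pol' x b * ?Q b)"
          by (simp add: pol'_def delta_def if_distrib[of "\<lambda>t. t * _"] sum.delta cong: if_cong)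
        finally show ?thesis using True by simp
      next
        case False
        then show ?thesis using VV_bellman[OF gamma pol Pd, where R=R and y=y] by (simp add: pol'_def)
      qed
      have "JJ P R \<gamma> (br mu) mu \<le> JJ P R \<gamma> pol' mu"
        by (rule improve[OF gamma pol pol' Pd mu imp])
      then have ge: "J p r \<gamma> (br mu) mu \<le> J p r \<gamma> pol' mu"
        by (simp add: J_eq P_def R_def)
      have "pol' \<in> BR p r \<gamma> mu"
        using pol' opt ge by (auto simp: BR_def)
      then have "pol' = br mu" using unique mu by simp
      then have "br mu x = delta a" by (metis fun_upd_same pol'_def)
      then show "\<exists>a. br mu x = (\<lambda>b. if b = a then 1 else 0)" by (auto simp: delta_def)
    qed
  qed
  define mu0 :: "'x \<Rightarrow> real" where "mu0 = (\<lambda>_. 1 / real CARD('x))"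
  have mu0: "mu0 \<in> distrs" by (simp add: mu0_def distrs_def)
  have const: "br mu1 = br mu0" if mu1: "mu1 \<in> distrs" for mu1
  proof -
    define seg where "seg t = (\<lambda>y. (1 - t) * mu0 y + t * mu1 y)" for t :: real
    have segd: "seg ` {0..1} \<subseteq> distrs"
    proof
      fix d assume "d \<in> seg ` {0..1}"
      then obtain t where t: "0 \<le> t" "t \<le> 1" and d: "d = seg t" by auto
      have nn: "0 \<le> d y" for y
        using t distr_nn[OF mu0, of y] distr_nn[OF mu1, of y] unfolding d seg_def
        by (intro add_nonneg_nonneg mult_nonneg_nonneg) auto
      have "(\<Sum>y\<in>UNIV. d y) = (1 - t) * (\<Sum>y\<in>UNIV. mu0 y) + t * (\<Sum>y\<in>UNIV. mu1 y)"
        unfolding d seg_def by (simp only: sum.distrib sum_distrib_left)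
      also have "\<dots> = 1" using mu0 mu1 by (simp add: distrs_def)
      finally show "d \<in> distrs" using nn by (simp add: distrs_def)
    qed
    have cs: "continuous_on {0..1} seg" unfolding seg_def
      by (intro continuous_on_coordinatewise_then_product continuous_intros)
    have cb: "continuous_on {0..1} (br \<circ> seg)"
      by (rule continuous_on_compose[OF cs continuous_on_subset[OF cont segd]])
    have conn: "connected ((br \<circ> seg) ` {0..1})"
      by (rule connected_continuous_image[OF cb]) simp
    have fin: "finite ((br \<circ> seg) ` {0..1})"
      by (rule finite_subset[OF _ finite_det]) (use segd det in auto)
    obtain c where c: "(br \<circ> seg) ` {0..1} = {c}"
      using connected_finite_iff_sing[OF conn] fin by auto
    have "br (seg 0) = c" "br (seg 1) = c" using c by auto
    moreover have "seg 0 = mu0" "seg 1 = mu1" by (auto simp: seg_def)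
    ultimately show ?thesis by simp
  qed
  show ?thesis
  proof (intro exI conjI ballI)
    show "deterministic (br mu0)" by (rule det[OF mu0])
    fix mu :: "'x \<Rightarrow> real" assume "mu \<in> distrs"
    then show "BR p r \<gamma> mu = {br mu0}" using unique const by simp
  qed
qed

end
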